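(* Let $\mathcal{G}=(\mathcal{V},\mathcal{E})$ be a connected undirected graph with $n$ vertices and $m$ edges, with incidence matrix $B\in\mathbb{R}^{n\times m}$ (for an arbitrary orientation of the edges), and let $\Gamma=\mathrm{diag}(\gamma_1,\dots,\gamma_m)$ with $\gamma_k>0$. Let $\mathcal{V}=\mathcal{V}_1\cup\mathcal{V}_2$ be a partition into disjoint nonempty sets and write $B=\begin{bmatrix}B_1\\ B_2\end{bmatrix}$ accordingly, $B_1\in\mathbb{R}^{|\mathcal{V}_1|\times m}$, $B_2\in\mathbb{R}^{|\mathcal{V}_2|\times m}$. Define $$L_S=B_1\Gamma B_1^T-B_1\Gamma B_2^T(B_2\Gamma B_2^T)^{-1}B_2\Gamma B_1^T,$$ $B_2^+=\Gamma B_2^T(B_2\Gamma B_2^T)^{-1}$ and the projected incidence matrix $B_S=B_1(I-B_2^+B_2)\in\mathbb{R}^{|\mathcal{V}_1|\times m}$. Then: (i) $\operatorname{im}\mathbb{1}=\ker B_S^T$, where $\mathbb{1}$ is the all-ones vector in $\mathbb{R}^{|\mathcal{V}_1|}$; (ii) $B_S\Gamma B_2^T=0$; (iii) $L_S=B_S\Gamma B_1^T$; (iv) $L_S=B_S\Gamma B_S^T$.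
   Context: The incidence matrix $B$ has entries $b_{ik}=+1$ if vertex $i$ is the tail of edge $k$, $-1$ if $i$ is the head of edge $k$, and $0$ otherwise. $L_S$ is the Schur complement of the weighted Laplacian $L=B\Gamma B^T$ with respect to the block indexed by $\mathcal{V}_2$; $B_2\Gamma B_2^T$ is invertible since $\mathcal{G}$ is connected. *)

theory Defs
  imports "HOL-Analysis.Analysis"
begin

definition incidence_matrix :: "('e::finite \<Rightarrow> 'v::finite) \<Rightarrow> ('e \<Rightarrow> 'v) \<Rightarrow> real^'e^'v" where
  "incidence_matrix src tgt =
     (\<chi> i k. if i = src k then 1 else if i = tgt k then -1 else 0)"

definition simple_oriented_graph :: "('e \<Rightarrow> 'v) \<Rightarrow> ('e \<Rightarrow> 'v) \<Rightarrow> bool" where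
  "simple_oriented_graph src tgt \<longleftrightarrow>
     (\<forall>k. src k \<noteq> tgt k) \<and>
     (\<forall>k l. {src k, tgt k} = {src l, tgt l} \<longrightarrow> k = l)"

definition adjacent :: "('e \<Rightarrow> 'v) \<Rightarrow> ('e \<Rightarrow> 'v) \<Rightarrow> 'v \<Rightarrow> 'v \<Rightarrow> bool" where
  "adjacent src tgt u v \<longleftrightarrow> (\<exists>k. (src k = u \<and> tgt k = v) \<or> (src k = v \<and> tgt k = u))"

definition graph_connected :: "('e \<Rightarrow> 'v) \<Rightarrow> ('e \<Rightarrow> 'v) \<Rightarrow> bool" where
  "graph_connected src tgt \<longleftrightarrow> (\<forall>u v. (adjacent src tgt)\<^sup>*\<^sup>* u v)"

definition diag_mat :: "('e::finite \<Rightarrow> real) \<Rightarrow> real^'e^'e" where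
  "diag_mat g = (\<chi> i j. if i = j then g i else 0)"

end

theory Submission
  imports Defs
begin

lemma matrix_vector_mult_minus: "(A::real^'n^'m) *v (- x) = - (A *v x)"
  by (simp add: matrix_vector_mult_def vec_eq_iff sum_negf)

lemma mmul_diff_left: "(A::real^'n^'m) ** (B - C) = A ** B - A ** C"
  by (simp add: matrix_matrix_mult_def vec_eq_iff algebra_simps sum_subtractf)

lemma mmul_diff_right: "((B::real^'n^'m) - C) ** (A::real^'p^'n) = B ** A - C ** A"
  by (simp add: matrix_matrix_mult_def vec_eq_iff algebra_simps sum_subtractf)

lemma transpose_diff: "transpose ((A::real^'n^'m) - B) = transpose A - transpose B"
  by (simp add: transpose_def vec_eq_iff)

lemma sum_UNIV_Plus: "(\<Sum>v\<in>(UNIV::('a::finite+'b::finite) set). f v) = (\<Sum>i\<in>UNIV. f (Inl i)) + (\<Sum>j\<in>UNIV. f (Inr j))"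
  by (subst UNIV_Plus_UNIV[symmetric], subst sum.Plus) (auto simp: comp_def)

lemma inc_comp:
  assumes "src k \<noteq> tgt k"
  shows "(transpose (incidence_matrix src tgt) *v y) $ k = y $ src k - y $ tgt k"
proof -
  have "\<And>v. (if v = src k then 1 else if v = tgt k then -1 else 0) * y $ v
      = (if v = src k then y $ src k else 0) - (if v = tgt k then y $ tgt k else 0)"
    using assms by auto
  then show ?thesis
    unfolding matrix_vector_mult_def transpose_def incidence_matrix_def
    by (simp add: sum_subtractf)
qed

lemma const_conn:
  assumes conn: "graph_connected src tgt" and h: "\<forall>k. y $ src k = y $ tgt k"
  shows "y $ u = y $ v"
proof -
  have "(adjacent src tgt)\<^sup>*\<^sup>* u v" using conn by (simp add: graph_connected_def)
  then show ?thesis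
  proof (induction rule: rtranclp_induct)
    case base then show ?case by simp
  next
    case (step w v) then show ?case using h by (auto simp: adjacent_def)
  qed
qed

lemma split_tB:
  fixes B :: "real^'e^('a::finite + 'b::finite)"
  shows "transpose B *v y = transpose (\<chi> i k. B $ Inl i $ k) *v (\<chi> i. y $ Inl i)
     + transpose (\<chi> i k. B $ Inr i $ k) *v (\<chi> j. y $ Inr j)"
  unfolding matrix_vector_mult_def transpose_def
  by (simp add: vec_eq_iff sum_UNIV_Plus)

lemma diag_mul: "diag_mat g *v u = (\<chi> k. g k * u $ k)"
proof -
  have "\<And>i j. (if i = j then g i else 0) * u $ j = (if i = j then g i * u $ i else 0)" by auto
  then show ?thesis unfolding diag_mat_def matrix_vector_mult_def by (simp add: vec_eq_iff)
qed

lemma transpose_diag: "transpose (diag_mat g) = diag_mat g"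
  unfolding diag_mat_def transpose_def by (simp add: vec_eq_iff)

theorem proposition1:
  fixes src tgt :: "'e::finite \<Rightarrow> ('a::finite + 'b::finite)"
    and \<gamma> :: "'e \<Rightarrow> real"
    and B :: "real^'e^('a + 'b)" and B1 :: "real^'e^'a" and B2 :: "real^'e^'b"
    and \<Gamma> :: "real^'e^'e" and LS :: "real^'a^'a"
    and B2p :: "real^'b^'e" and BS :: "real^'e^'a"
  assumes simple: "simple_oriented_graph src tgt"
    and conn: "graph_connected src tgt"
    and pos: "\<forall>k. \<gamma> k > 0"
  defines "B \<equiv> incidence_matrix src tgt"
    and "B1 \<equiv> (\<chi> i k. B $ Inl i $ k)"
    and "B2 \<equiv> (\<chi> i k. B $ Inr i $ k)"
    and "\<Gamma> \<equiv> diag_mat \<gamma>"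
    and "LS \<equiv> B1 ** \<Gamma> ** transpose B1
              - B1 ** \<Gamma> ** transpose B2 ** matrix_inv (B2 ** \<Gamma> ** transpose B2) ** B2 ** \<Gamma> ** transpose B1"
    and "B2p \<equiv> \<Gamma> ** transpose B2 ** matrix_inv (B2 ** \<Gamma> ** transpose B2)"
    and "BS \<equiv> B1 ** (mat 1 - B2p ** B2)"
  shows "range (\<lambda>c::real. c *\<^sub>R (\<chi> i. 1 :: real^'a)) = {x. transpose BS *v x = 0}
       \<and> BS ** \<Gamma> ** transpose B2 = 0
       \<and> LS = BS ** \<Gamma> ** transpose B1
       \<and> LS = BS ** \<Gamma> ** transpose BS"
proof -
  have st: "\<And>k. src k \<noteq> tgt k" using simple by (simp add: simple_oriented_graph_def)
  have split: "\<And>y. transpose B *v y = transpose B1 *v (\<chi> i. y $ Inl i) + transpose B2 *v (\<chi> j. y $ Inr j)"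
    unfolding B1_def B2_def by (rule split_tB)
  have kerB: "\<And>y u v. transpose B *v y = 0 \<Longrightarrow> y $ u = y $ v"
  proof -
    fix y u v assume h: "transpose B *v y = 0"
    have "\<forall>k. y $ src k = y $ tgt k"
    proof
      fix k
      have "(transpose B *v y) $ k = y $ src k - y $ tgt k" unfolding B_def using st by (rule inc_comp)
      then show "y $ src k = y $ tgt k" using h by simp
    qed
    then show "y $ u = y $ v" using const_conn[OF conn] by blast
  qed
  define M where "M = B2 ** \<Gamma> ** transpose B2"
  define Mi where "Mi = matrix_inv M"
  have tG: "transpose \<Gamma> = \<Gamma>" unfolding \<Gamma>_def by (rule transpose_diag)
  have Minj: "\<forall>x. M *v x = 0 \<longrightarrow> x = 0"
  proof (intro allI impI)
    fix x :: "real^'b" assume Mx: "M *v x = 0"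
    define u where "u = transpose B2 *v x"
    have "M *v x = B2 *v (\<Gamma> *v u)" unfolding M_def u_def by (simp add: matrix_vector_mul_assoc matrix_mul_assoc del: transpose_matrix_vector)
    then have "0 = inner x (B2 *v (\<Gamma> *v u))" using Mx by simp
    also have "\<dots> = inner u (\<Gamma> *v u)" unfolding u_def by (simp add: dot_lmul_matrix[symmetric])
    also have "\<dots> = (\<Sum>k\<in>UNIV. \<gamma> k * (u $ k)^2)"
      unfolding \<Gamma>_def diag_mul inner_vec_def by (simp add: power2_eq_square mult_ac)
    finally have s0: "(\<Sum>k\<in>UNIV. \<gamma> k * (u $ k)^2) = 0" by simp
    have "\<forall>k\<in>UNIV. \<gamma> k * (u $ k)^2 = 0"
      using iffD1[OF sum_nonneg_eq_0_iff s0] pos by (simp add: less_imp_le)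
    then have u0: "u = 0" using pos by (simp add: vec_eq_iff) (metis less_irrefl)
    define y :: "real^('a+'b)" where "y = (\<chi> v. case v of Inl i \<Rightarrow> 0 | Inr j \<Rightarrow> x $ j)"
    have "(\<chi> i. y $ Inl i) = 0" "(\<chi> j. y $ Inr j) = x" unfolding y_def by (simp_all add: vec_eq_iff)
    then have "transpose B *v y = 0" using split[of y] u0 unfolding u_def by simp
    then have "\<And>j. y $ Inr j = y $ Inl undefined" using kerB by blast
    then show "x = 0" unfolding y_def by (simp add: vec_eq_iff)
  qed
  have "invertible M" using Minj matrix_left_invertible_ker invertible_left_inverse by blast
  then have MMi: "M ** Mi = mat 1 \<and> Mi ** M = mat 1" unfolding Mi_def matrix_inv_def invertible_def
    by (rule someI_ex)
  have r1: "B2 ** (\<Gamma> ** (transpose B2 ** Mi)) = mat 1" using MMi unfolding M_def by (simp add: matrix_mul_assoc)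
  have r2: "B2 ** (\<Gamma> ** (transpose B2 ** (Mi ** Z))) = Z" for Z :: "real^'n^'b"
    using MMi unfolding M_def by (metis matrix_mul_assoc matrix_mul_lid)
  have r3: "Mi ** (B2 ** (\<Gamma> ** transpose B2)) = mat 1" using MMi unfolding M_def by (simp add: matrix_mul_assoc)
  have r4: "Mi ** (B2 ** (\<Gamma> ** (transpose B2 ** Z))) = Z" for Z :: "real^'n^'b"
    using MMi unfolding M_def by (metis matrix_mul_assoc matrix_mul_lid)
  have tM: "transpose M = M" unfolding M_def by (simp add: matrix_transpose_mul tG matrix_mul_assoc)
  have r5: "transpose Mi ** (B2 ** (\<Gamma> ** transpose B2)) = mat 1"
  proof -
    have "transpose (M ** Mi) = mat 1" using MMi by simp
    then have "transpose Mi ** M = mat 1" using tM by (simp add: matrix_transpose_mul)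
    then show ?thesis unfolding M_def by (simp add: matrix_mul_assoc)
  qed
  have r6: "transpose Mi ** (B2 ** (\<Gamma> ** (transpose B2 ** Z))) = Z" for Z :: "real^'n^'b"
    using r5 by (metis matrix_mul_assoc matrix_mul_lid)
  note simps = matrix_mul_assoc[symmetric] mmul_diff_left mmul_diff_right transpose_diff
     matrix_transpose_mul tG r1 r2 r3 r4 r5 r6
  have ii: "BS ** \<Gamma> ** transpose B2 = 0"
    unfolding BS_def B2p_def M_def[symmetric] Mi_def[symmetric] by (simp add: simps)
  have iii: "LS = BS ** \<Gamma> ** transpose B1"
    unfolding LS_def BS_def B2p_def M_def[symmetric] Mi_def[symmetric] by (simp add: simps)
  have iv: "LS = BS ** \<Gamma> ** transpose BS"
    unfolding LS_def BS_def B2p_def M_def[symmetric] Mi_def[symmetric] by (simp add: simps)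
  define Q where "Q = mat 1 - transpose B2 ** transpose B2p"
  have Q0: "Q ** transpose B2 = 0"
    unfolding Q_def B2p_def M_def[symmetric] Mi_def[symmetric] by (simp add: simps)
  have tBS: "transpose BS = Q ** transpose B1"
    unfolding BS_def Q_def by (simp add: matrix_transpose_mul transpose_diff)
  have Qv: "Q *v w = w - transpose B2 *v (transpose B2p *v w)" for w
    unfolding Q_def by (simp add: matrix_vector_mult_diff_rdistrib matrix_vector_mul_assoc del: transpose_matrix_vector)
  define one_a where "one_a = (\<chi> i. 1 :: real^'a)"
  define one_b where "one_b = (\<chi> i. 1 :: real^'b)"
  have col0: "transpose B *v (\<chi> v. 1) = 0"
  proof -
    have "(transpose B *v (\<chi> v. 1)) $ k = 0" for k
      unfolding B_def using inc_comp[of src k tgt "\<chi> v. 1", OF st[of k]] by simp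
    then show ?thesis by (simp add: vec_eq_iff)
  qed
  have c1: "transpose B1 *v one_a = - (transpose B2 *v one_b)"
    using split[of "\<chi> v. 1"] col0 unfolding one_a_def one_b_def by (simp add: eq_neg_iff_add_eq_0)
  have BS1: "transpose BS *v one_a = 0"
  proof -
    have "transpose BS *v one_a = Q *v (transpose B1 *v one_a)"
      unfolding tBS by (simp add: matrix_vector_mul_assoc del: transpose_matrix_vector)
    also have "\<dots> = - ((Q ** transpose B2) *v one_b)" unfolding c1
      by (simp add: matrix_vector_mul_assoc[symmetric] matrix_vector_mult_minus del: transpose_matrix_vector)
    finally show ?thesis using Q0 by simp
  qed
  have i: "range (\<lambda>c::real. c *\<^sub>R one_a) = {x. transpose BS *v x = 0}"
  proof (intro set_eqI iffI)
    fix x assume "x \<in> range (\<lambda>c::real. c *\<^sub>R one_a)"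
    then obtain c where "x = c *\<^sub>R one_a" by auto
    then show "x \<in> {x. transpose BS *v x = 0}" using BS1
      by (simp add: matrix_vector_mult_scaleR del: transpose_matrix_vector)
  next
    fix x assume "x \<in> {x. transpose BS *v x = 0}"
    then have "Q *v (transpose B1 *v x) = 0"
      unfolding tBS by (simp add: matrix_vector_mul_assoc del: transpose_matrix_vector)
    then have e: "transpose B1 *v x - transpose B2 *v (transpose B2p *v (transpose B1 *v x)) = 0"
      unfolding Qv .
    define z where "z = transpose B2p *v (transpose B1 *v x)"
    define y :: "real^('a+'b)" where "y = (\<chi> v. case v of Inl i \<Rightarrow> x $ i | Inr j \<Rightarrow> - z $ j)"
    have "(\<chi> i. y $ Inl i) = x" "(\<chi> j. y $ Inr j) = - z" unfolding y_def by (simp_all add: vec_eq_iff)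
    then have "transpose B *v y = 0" using split[of y] e unfolding z_def
      by (simp add: matrix_vector_mult_minus del: transpose_matrix_vector)
    then have "\<And>i. y $ Inl i = y $ Inl undefined" using kerB by blast
    then have "x = (y $ Inl undefined) *\<^sub>R one_a" unfolding y_def one_a_def by (simp add: vec_eq_iff)
    then show "x \<in> range (\<lambda>c::real. c *\<^sub>R one_a)" by blast
  qed
  show ?thesis using i ii iii iv unfolding one_a_def by blast
qed

end
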